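(* Let $X$ be a CAT(0) Euclidean polygonal complex and let $x_1,x_2,x_3,x_4\in X$ be such that $\overline{x_1x_2}\cap\overline{x_3x_4}$ is a segment. Then $$\bigcap_{1\le i<j<k\le 4}\blacktriangle(x_i,x_j,x_k)=\overline{x_1x_2}\cap\overline{x_3x_4}.$$
   Context: A CAT(0) Euclidean polygonal complex is a 2-dimensional polygonal complex whose cells are convex Euclidean polygons, with its induced length metric, assumed CAT(0). $\overline{ab}$ denotes the unique geodesic between $a,b$; $\triangle(x,y,z)=\overline{xy}\cup\overline{yz}\cup\overline{zx}$. The full triangle $\blacktriangle(x,y,z)$ is the union of $\triangle(x,y,z)$ with the set of points $p\in X\setminus\triangle(x,y,z)$ for which $\triangle(x,y,z)$ is not null-homotopic in $X\setminus\{p\}$. *)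

theory Defs
  imports "HOL-Analysis.Analysis"
begin

definition convex_polygon :: "(real^2) set \<Rightarrow> bool" where
  "convex_polygon P \<longleftrightarrow> polytope P \<and> interior P \<noteq> {}"

type_synonym 'a cell = "(real^2) set \<times> (real^2 \<Rightarrow> 'a)"

text \<open>A family of cells (polygon P together with its characteristic map into the space)
  forms a polygonal complex structure on the whole type 'a: every cell map is injective,
  the cells cover the space, and whenever two cells meet at a point they are glued along
  faces containing that point via an isometry of those faces.\<close>
definition polygonal_complex :: "'a cell set \<Rightarrow> bool" where
  "polygonal_complex C \<longleftrightarrow>
     (\<forall>(P, f)\<in>C. convex_polygon P \<and> inj_on f P) \<and>
     (\<Union>(P, f)\<in>C. f ` P) = UNIV \<and>
     (\<forall>(P, f)\<in>C. \<forall>(Q, g)\<in>C. \<forall>x\<in>P. \<forall>x'\<in>Q. f x = g x' \<longrightarrow>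
        (\<exists>T T' h. T face_of P \<and> x \<in> T \<and> T' face_of Q \<and> h ` T = T' \<and>
           (\<forall>u\<in>T. \<forall>v\<in>T. dist (h u) (h v) = dist u v) \<and>
           (\<forall>y\<in>T. g (h y) = f y)))"

text \<open>m-strings: lists of (cell, start point, end point), each piece inside one cell,
  consecutive pieces matching in the space.\<close>
definition mstring :: "'a cell set \<Rightarrow> 'a \<Rightarrow> 'a \<Rightarrow> ('a cell \<times> (real^2) \<times> (real^2)) list \<Rightarrow> bool" where
  "mstring C x y L \<longleftrightarrow> L \<noteq> [] \<and>
     (\<forall>(c, u, v)\<in>set L. c \<in> C \<and> u \<in> fst c \<and> v \<in> fst c) \<and>
     (case hd L of (c, u, v) \<Rightarrow> snd c u = x) \<and>
     (case last L of (c, u, v) \<Rightarrow> snd c v = y) \<and>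
     (\<forall>i. Suc i < length L \<longrightarrow>
        (case L ! i of (c, u, v) \<Rightarrow> snd c v) = (case L ! Suc i of (c, u, v) \<Rightarrow> snd c u))"

definition mstring_length :: "('a cell \<times> (real^2) \<times> (real^2)) list \<Rightarrow> real" where
  "mstring_length L = sum_list (map (\<lambda>(c, u, v). dist u v) L)"

definition induced_dist :: "'a cell set \<Rightarrow> 'a \<Rightarrow> 'a \<Rightarrow> real" where
  "induced_dist C x y = Inf {mstring_length L | L. mstring C x y L}"

definition euclidean_polygonal_complex :: "'a::metric_space cell set \<Rightarrow> bool" where
  "euclidean_polygonal_complex C \<longleftrightarrow> polygonal_complex C \<and> (\<forall>x y. dist x y = induced_dist C x y)"

definition geodesic_path :: "'a::metric_space \<Rightarrow> 'a \<Rightarrow> (real \<Rightarrow> 'a) \<Rightarrow> bool" where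
  "geodesic_path x y \<gamma> \<longleftrightarrow> \<gamma> 0 = x \<and> \<gamma> 1 = y \<and>
     (\<forall>s\<in>{0..1}. \<forall>t\<in>{0..1}. dist (\<gamma> s) (\<gamma> t) = \<bar>s - t\<bar> * dist x y)"

definition CAT0 :: "'a::metric_space itself \<Rightarrow> bool" where
  "CAT0 _ \<longleftrightarrow>
     (\<forall>x y::'a. \<exists>\<gamma>. geodesic_path x y \<gamma>) \<and>
     (\<forall>(x::'a) y z \<gamma>1 \<gamma>2 \<gamma>3 (a::real^2) b c.
        geodesic_path x y \<gamma>1 \<and> geodesic_path y z \<gamma>2 \<and> geodesic_path z x \<gamma>3 \<and>
        dist a b = dist x y \<and> dist b c = dist y z \<and> dist c a = dist z x \<longrightarrow>
        (let T = {(\<gamma>1 t, a + t *\<^sub>R (b - a)) | t. t \<in> {0..1}} \<union>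
                 {(\<gamma>2 t, b + t *\<^sub>R (c - b)) | t. t \<in> {0..1}} \<union>
                 {(\<gamma>3 t, c + t *\<^sub>R (a - c)) | t. t \<in> {0..1}}
         in \<forall>(p, p')\<in>T. \<forall>(q, q')\<in>T. dist p q \<le> dist p' q'))"

definition seg :: "'a::metric_space \<Rightarrow> 'a \<Rightarrow> 'a set" where
  "seg x y = (THE S. \<exists>\<gamma>. geodesic_path x y \<gamma> \<and> S = \<gamma> ` {0..1})"

definition gpath :: "'a::metric_space \<Rightarrow> 'a \<Rightarrow> real \<Rightarrow> 'a" where
  "gpath x y = (SOME \<gamma>. geodesic_path x y \<gamma>)"

definition tri :: "'a::metric_space \<Rightarrow> 'a \<Rightarrow> 'a \<Rightarrow> 'a set" where
  "tri x y z = seg x y \<union> seg y z \<union> seg z x"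

definition tri_loop :: "'a::metric_space \<Rightarrow> 'a \<Rightarrow> 'a \<Rightarrow> real \<Rightarrow> 'a" where
  "tri_loop x y z = (gpath x y +++ gpath y z) +++ gpath z x"

definition full_tri :: "'a::metric_space \<Rightarrow> 'a \<Rightarrow> 'a \<Rightarrow> 'a set" where
  "full_tri x y z = tri x y z \<union>
     {p. p \<notin> tri x y z \<and>
         \<not> homotopic_loops (UNIV - {p}) (tri_loop x y z) (\<lambda>_. tri_loop x y z 0)}"

end

theory Submission
  imports Defs
begin


lemma dist2: "dist (u::real^2) w = sqrt ((u$1 - w$1)^2 + (u$2 - w$2)^2)"
  by (simp add: dist_norm norm_vec_def L2_set_def sum_2)

lemma cmp_tri:
  fixes A B C :: real
  assumes "0 \<le> A" "0 \<le> B" "0 \<le> C" "A \<le> B + C" "B \<le> A + C" "C \<le> A + B"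
  shows "\<exists>cx cy. 2*A*cx = A^2+B^2-C^2 \<and> cx^2+cy^2 = B^2"
proof (cases "A = 0")
  case True
  then have "B = C" using assms by auto
  then show ?thesis using True by (intro exI[of _ B] exI[of _ 0]) auto
next
  case False
  define cx where "cx = (A^2+B^2-C^2)/(2*A)"
  have "(A^2+B^2-C^2)^2 \<le> (2*A*B)^2"
  proof -
    have "(A^2+B^2-C^2)^2 - (2*A*B)^2 = ((A-B)^2 - C^2) * ((A+B)^2 - C^2)"
      by algebra
    moreover have "(A-B)^2 - C^2 \<le> 0"
    proof -
      have "\<bar>A-B\<bar> \<le> \<bar>C\<bar>" using assms by arith
      then have "(A-B)^2 \<le> C^2" by (simp only: abs_le_square_iff)
      then show ?thesis by simp
    qed
    moreover have "(A+B)^2 - C^2 \<ge> 0"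
    proof -
      have "\<bar>C\<bar> \<le> \<bar>A+B\<bar>" using assms by arith
      then have "C^2 \<le> (A+B)^2" by (simp only: abs_le_square_iff)
      then show ?thesis by simp
    qed
    ultimately show ?thesis using mult_nonpos_nonneg by smt
  qed
  then have "cx^2 \<le> B^2" using False assms
    by (simp add: cx_def power_divide divide_le_eq power_mult_distrib mult_ac)
  then show ?thesis
    by (intro exI[of _ cx] exI[of _ "sqrt (B^2 - cx^2)"]) (use False in \<open>auto simp: cx_def\<close>)
qed


lemma CAT0_ineq:
  fixes x y z :: "'a::metric_space"
  assumes cat: "CAT0 TYPE('a)" and g: "geodesic_path x y \<gamma>" and d: "geodesic_path x z \<delta>"
    and s: "s \<in> {0..1}" and t: "t \<in> {0..1}"
  shows "(dist (\<gamma> s) (\<delta> t))^2 \<le> s^2*(dist x y)^2 + t^2*(dist x z)^2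
           - s*t*((dist x y)^2 + (dist x z)^2 - (dist y z)^2)"
proof -
  define A B C where "A = dist x y" and "B = dist x z" and "C = dist y z"
  have tr: "A \<le> B + C" "B \<le> A + C" "C \<le> A + B"
    unfolding A_def B_def C_def
    by (metis dist_triangle dist_commute)+
  obtain cx cy where cc: "2*A*cx = A^2+B^2-C^2" "cx^2+cy^2 = B^2"
    using cmp_tri[of A B C] tr unfolding A_def B_def C_def by auto
  obtain \<eta> where eta: "geodesic_path y z \<eta>" using cat unfolding CAT0_def by blast
  define \<gamma>3 where "\<gamma>3 = (\<lambda>r. \<delta> (1 - r))"
  have g3: "geodesic_path z x \<gamma>3"
    using d unfolding geodesic_path_def \<gamma>3_def
  proof (intro conjI ballI)
    fix s t :: real assume a: "s \<in> {0..1}" "t \<in> {0..1}"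
      and h: "\<delta> 0 = x \<and> \<delta> 1 = z \<and> (\<forall>s\<in>{0..1}. \<forall>t\<in>{0..1}. dist (\<delta> s) (\<delta> t) = \<bar>s - t\<bar> * dist x z)"
    then have "dist (\<delta> (1-s)) (\<delta> (1-t)) = \<bar>(1-s) - (1-t)\<bar> * dist x z" by auto
    then show "dist (\<delta> (1 - s)) (\<delta> (1 - t)) = \<bar>s - t\<bar> * dist z x"
      by (simp add: dist_commute abs_minus_commute)
  qed auto
  define a0 b0 c0 :: "real^2" where "a0 = 0" and "b0 = vector [A, 0]" and "c0 = vector [cx, cy]"
  have dab: "dist a0 b0 = dist x y"
    unfolding a0_def b0_def dist2 A_def by simp
  have dbc: "dist b0 c0 = dist y z"
  proof -
    have "(A - cx)^2 + cy^2 = C^2" using cc by (simp add: power2_eq_square algebra_simps)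
    then have "dist b0 c0 = sqrt (C^2)" unfolding b0_def c0_def dist2 by simp
    then show ?thesis using C_def by simp
  qed
  have dca: "dist c0 a0 = dist z x"
  proof -
    have "dist c0 a0 = sqrt (B^2)" unfolding a0_def c0_def dist2 using cc by simp
    then show ?thesis using B_def by (simp add: dist_commute)
  qed
  note H0 = cat[unfolded CAT0_def, THEN conjunct2, rule_format, of x y \<gamma> z \<eta> \<gamma>3 a0 b0 c0]
  have H: "\<forall>(p, p')\<in>{(\<gamma> t, a0 + t *\<^sub>R (b0 - a0)) | t. t \<in> {0..1}} \<union>
                 {(\<eta> t, b0 + t *\<^sub>R (c0 - b0)) | t. t \<in> {0..1}} \<union>
                 {(\<gamma>3 t, c0 + t *\<^sub>R (a0 - c0)) | t. t \<in> {0..1}}.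
           \<forall>(q, q')\<in>{(\<gamma> t, a0 + t *\<^sub>R (b0 - a0)) | t. t \<in> {0..1}} \<union>
                 {(\<eta> t, b0 + t *\<^sub>R (c0 - b0)) | t. t \<in> {0..1}} \<union>
                 {(\<gamma>3 t, c0 + t *\<^sub>R (a0 - c0)) | t. t \<in> {0..1}}. dist p q \<le> dist p' q'"
    using H0 g eta g3 dab dbc dca unfolding Let_def by blast
  have P: "(\<gamma> s, a0 + s *\<^sub>R (b0 - a0)) \<in> {(\<gamma> t, a0 + t *\<^sub>R (b0 - a0)) | t. t \<in> {0..1}}"
    using s by blast
  have Q: "(\<gamma>3 (1-t), c0 + (1-t) *\<^sub>R (a0 - c0)) \<in> {(\<gamma>3 t, c0 + t *\<^sub>R (a0 - c0)) | t. t \<in> {0..1}}"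
    using t by force
  have le: "dist (\<gamma> s) (\<gamma>3 (1-t)) \<le> dist (a0 + s *\<^sub>R (b0 - a0)) (c0 + (1-t) *\<^sub>R (a0 - c0))"
    using H P Q by blast
  have e1: "\<gamma>3 (1-t) = \<delta> t" unfolding \<gamma>3_def by simp
  have e2: "dist (a0 + s *\<^sub>R (b0 - a0)) (c0 + (1-t) *\<^sub>R (a0 - c0)) = sqrt ((s*A - t*cx)^2 + (t*cy)^2)"
    unfolding a0_def b0_def c0_def dist2 by (simp add: algebra_simps)
  have "(dist (\<gamma> s) (\<delta> t))^2 \<le> (s*A - t*cx)^2 + (t*cy)^2"
  proof -
    have "dist (\<gamma> s) (\<delta> t) \<le> sqrt ((s*A - t*cx)^2 + (t*cy)^2)" using le e1 e2 by simp
    then have "(dist (\<gamma> s) (\<delta> t))^2 \<le> (sqrt ((s*A - t*cx)^2 + (t*cy)^2))^2"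
      by (intro power_mono) auto
    moreover have "(sqrt ((s*A - t*cx)^2 + (t*cy)^2))^2 = (s*A - t*cx)^2 + (t*cy)^2"
      by (intro real_sqrt_pow2) simp
    ultimately show ?thesis by simp
  qed
  also have "\<dots> = s^2*A^2 + t^2*(cx^2+cy^2) - s*t*(2*A*cx)" by (simp add: power2_eq_square algebra_simps)
  also have "\<dots> = s^2*A^2 + t^2*B^2 - s*t*(A^2+B^2-C^2)" using cc by simp
  finally show ?thesis unfolding A_def B_def C_def .
qed



definition btw :: "'a::metric_space \<Rightarrow> 'a \<Rightarrow> 'a \<Rightarrow> bool" where
  "btw u z w \<longleftrightarrow> dist u z + dist z w = dist u w"

lemma btw_sym: "btw u z w \<longleftrightarrow> btw w z u"
  unfolding btw_def by (auto simp: dist_commute)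

lemma gpath_geo:
  assumes "CAT0 TYPE('a::metric_space)"
  shows "geodesic_path (x::'a) y (gpath x y)"
proof -
  have "\<exists>\<gamma>. geodesic_path x y \<gamma>" using assms[unfolded CAT0_def, THEN conjunct1] by blast
  then show ?thesis unfolding gpath_def by (rule someI_ex)
qed

lemma geo_dist:
  assumes "geodesic_path x y \<gamma>" "s \<in> {0..1}" "t \<in> {0..1}"
  shows "dist (\<gamma> s) (\<gamma> t) = \<bar>s - t\<bar> * dist x y"
proof -
  have h: "\<forall>s\<in>{0..1}. \<forall>t\<in>{0..1}. dist (\<gamma> s) (\<gamma> t) = \<bar>s - t\<bar> * dist x y"
    using assms(1) unfolding geodesic_path_def by blast
  show ?thesis using h assms(2,3) by blast
qed

lemma geo_ends:
  assumes "geodesic_path x y \<gamma>"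
  shows "\<gamma> 0 = x" "\<gamma> 1 = y"
  using assms unfolding geodesic_path_def by blast+

lemma geo_basic:
  assumes "geodesic_path x y \<gamma>" "s \<in> {0..1}"
  shows "dist x (\<gamma> s) = s * dist x y" "dist (\<gamma> s) y = (1 - s) * dist x y"
proof -
  have z: "(0::real) \<in> {0..1}" "(1::real) \<in> {0..1}" by auto
  have "dist (\<gamma> 0) (\<gamma> s) = \<bar>0 - s\<bar> * dist x y" "dist (\<gamma> s) (\<gamma> 1) = \<bar>s - 1\<bar> * dist x y"
    using geo_dist[OF assms(1) z(1) assms(2)] geo_dist[OF assms(1) assms(2) z(2)] by auto
  moreover have "\<bar>0 - s\<bar> = s" "\<bar>s - 1\<bar> = 1 - s" using assms(2) by auto
  ultimately show "dist x (\<gamma> s) = s * dist x y" "dist (\<gamma> s) y = (1 - s) * dist x y"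
    using geo_ends[OF assms(1)] by auto
qed

lemma geo_unique:
  assumes cat: "CAT0 TYPE('a::metric_space)" and g: "geodesic_path (x::'a) y \<gamma>"
    and d: "geodesic_path x y \<delta>" and s: "s \<in> {0..1}"
  shows "\<gamma> s = \<delta> s"
proof -
  have "(dist (\<gamma> s) (\<delta> s))^2 \<le> s^2*(dist x y)^2 + s^2*(dist x y)^2
           - (s * s) * ((dist x y)^2 + (dist x y)^2 - (dist y y)^2)"
    using CAT0_ineq[OF cat g d s s] .
  also have "\<dots> = 0" by (simp add: power2_eq_square algebra_simps)
  finally show ?thesis by simp
qed

lemma seg_eq:
  assumes cat: "CAT0 TYPE('a::metric_space)"
  shows "seg (x::'a) y = gpath x y ` {0..1}"
  unfolding seg_def
proof (rule the_equality)
  show "\<exists>\<gamma>. geodesic_path x y \<gamma> \<and> gpath x y ` {0..1} = \<gamma> ` {0..1}"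
    using gpath_geo[OF cat] by blast
next
  fix S assume "\<exists>\<gamma>. geodesic_path x y \<gamma> \<and> S = \<gamma> ` {0..1}"
  then obtain \<gamma> where "geodesic_path x y \<gamma>" "S = \<gamma> ` {0..1}" by blast
  then show "S = gpath x y ` {0..1}"
    using geo_unique[OF cat _ gpath_geo[OF cat]] by (auto simp: image_def)
qed

lemma seg_char:
  assumes cat: "CAT0 TYPE('a::metric_space)"
  shows "(z::'a) \<in> seg x y \<longleftrightarrow> btw x z y"
proof
  assume "z \<in> seg x y"
  then obtain s where s: "s \<in> {0..1}" "z = gpath x y s" using seg_eq[OF cat] by auto
  show "btw x z y" unfolding btw_def using geo_basic[OF gpath_geo[OF cat] s(1)] s(2)
    by (simp add: algebra_simps)
next
  assume b: "btw x z y"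
  define D where "D = dist x y"
  show "z \<in> seg x y"
  proof (cases "D = 0")
    case True
    then have "dist x z = 0" using b unfolding btw_def D_def
      by (smt (verit) zero_le_dist)
    then have "z = x" by simp
    moreover have "gpath x y 0 = x" using gpath_geo[OF cat] by (rule geo_ends)
    ultimately have "z \<in> gpath x y ` {0..1}" by (intro image_eqI[of _ _ 0]) auto
    then show ?thesis using seg_eq[OF cat] by simp
  next
    case False
    then have Dp: "D > 0" unfolding D_def by simp
    define t0 where "t0 = dist x z / D"
    have "dist x z \<le> D" using b zero_le_dist[of z y] unfolding btw_def D_def by linarith
    then have t0: "t0 \<in> {0..1}" using Dp unfolding t0_def by (simp add: field_simps)
    have "(dist (gpath x y t0) (gpath x z 1))^2 \<le> t0^2*(dist x y)^2 + 1^2*(dist x z)^2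
           - t0*1*((dist x y)^2 + (dist x z)^2 - (dist y z)^2)"
      using CAT0_ineq[OF cat gpath_geo[OF cat, of x y] gpath_geo[OF cat, of x z] t0, of 1] by simp
    also have "\<dots> = 0"
    proof -
      define B where "B = dist x z"
      have c: "dist y z = D - B" using b unfolding btw_def D_def B_def by (simp add: dist_commute)
      have e1: "t0^2 * D^2 = B^2" unfolding t0_def B_def[symmetric] using Dp
        by (simp add: power_divide)
      have e2: "t0 * (D^2 + B^2 - (D - B)^2) = 2 * B^2" unfolding t0_def B_def[symmetric] using Dp
        by (simp add: power2_eq_square algebra_simps)
      show ?thesis unfolding c B_def[symmetric] D_def[symmetric] using e1 e2 by simp
    qed
    finally have "gpath x y t0 = gpath x z 1" by simp
    moreover have "gpath x z 1 = z" using gpath_geo[OF cat] by (rule geo_ends)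
    ultimately have "z \<in> gpath x y ` {0..1}" using t0 by (intro image_eqI[of _ _ t0]) auto
    then show ?thesis using seg_eq[OF cat] by simp
  qed
qed

lemma seg_param:
  assumes cat: "CAT0 TYPE('a::metric_space)" and "btw x (z::'a) y"
  obtains s where "s \<in> {0..1}" "z = gpath x y s"
  using assms seg_char[OF cat] seg_eq[OF cat] by blast

lemma btw_split:
  assumes cat: "CAT0 TYPE('a::metric_space)" and "btw u m w" "btw u (z::'a) w"
  shows "btw u z m \<or> btw m z w"
proof -
  obtain s where s: "s \<in> {0..1}" "m = gpath u w s" using seg_param[OF cat assms(2)] .
  obtain t where t: "t \<in> {0..1}" "z = gpath u w t" using seg_param[OF cat assms(3)] .
  note G = gpath_geo[OF cat, of u w]
  have d1: "dist z m = \<bar>t - s\<bar> * dist u w" using geo_dist[OF G t(1) s(1)] s t by simp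
  have d2: "dist u z = t * dist u w" "dist z w = (1-t) * dist u w" using geo_basic[OF G t(1)] t by auto
  have d3: "dist u m = s * dist u w" "dist m w = (1-s) * dist u w" using geo_basic[OF G s(1)] s by auto
  show ?thesis
  proof (cases "t \<le> s")
    case True
    then show ?thesis unfolding btw_def using d1 d2 d3 by (simp add: algebra_simps)
  next
    case False
    then show ?thesis unfolding btw_def using d1 d2 d3 by (simp add: algebra_simps dist_commute)
  qed
qed



lemma btw_overlap:
  assumes cat: "CAT0 TYPE('a::metric_space)" and ab: "btw u a b" and bw: "btw a b w" and ne: "a \<noteq> (b::'a)"
  shows "btw u a w"
proof -
  define m where "m = gpath a b (1/2)"
  define h where "h = dist a b / 2"
  have hp: "h > 0" using ne unfolding h_def by simp
  have hh: "(1/2::real) \<in> {0..1}" by simp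
  have am: "dist a m = h" "dist m b = h"
    using geo_basic[OF gpath_geo[OF cat, of a b] hh] unfolding m_def h_def by auto
  have um: "dist u m = dist u a + h"
    using ab dist_triangle[of u m a] dist_triangle[of u b m] am unfolding btw_def h_def
    by (simp add: dist_commute)
  have mw: "dist m w = h + dist b w"
    using bw dist_triangle[of m w b] dist_triangle[of a w m] am unfolding btw_def h_def
    by (simp add: dist_commute)
  have "btw m a u" unfolding btw_def using um am by (simp add: dist_commute)
  then obtain s where s: "s \<in> {0..1}" "a = gpath m u s" using seg_param[OF cat] by blast
  have "btw m b w" unfolding btw_def using mw am by (simp add: dist_commute)
  then obtain t where t: "t \<in> {0..1}" "b = gpath m w t" using seg_param[OF cat] by blast
  define L1 L2 C where "L1 = dist m u" and "L2 = dist m w" and "C = dist u w"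
  have sL: "s * L1 = h" using geo_basic(1)[OF gpath_geo[OF cat, of m u] s(1)] s(2) am
    unfolding L1_def by (simp add: dist_commute)
  have tL: "t * L2 = h" using geo_basic(1)[OF gpath_geo[OF cat, of m w] t(1)] t(2) am
    unfolding L2_def by (simp add: dist_commute)
  have L1p: "L1 > 0" using um hp unfolding L1_def by (metis add_nonneg_pos dist_commute zero_le_dist)
  have L2p: "L2 > 0" using mw hp unfolding L2_def by (metis add_pos_nonneg zero_le_dist)
  have "(dist a b)^2 \<le> s^2*L1^2 + t^2*L2^2 - s*t*(L1^2 + L2^2 - C^2)"
    using CAT0_ineq[OF cat gpath_geo[OF cat, of m u] gpath_geo[OF cat, of m w] s(1) t(1)] s(2) t(2)
    unfolding L1_def L2_def C_def by simp
  moreover have "s^2*L1^2 = h^2" "t^2*L2^2 = h^2" using sL tL by (auto simp: power_mult_distrib[symmetric])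
  moreover have "dist a b = 2*h" unfolding h_def by simp
  ultimately have i1: "s*t*(L1^2 + L2^2 - C^2) \<le> - 2*h^2" by (simp add: power2_eq_square)
  have "(s*L1)*(t*L2)*(L1^2 + L2^2 - C^2) \<le> (- 2*h^2) * (L1*L2)"
  proof -
    have "s*t*(L1^2 + L2^2 - C^2) * (L1*L2) \<le> (- 2*h^2) * (L1*L2)"
      using i1 L1p L2p by (intro mult_right_mono) auto
    then show ?thesis by (simp add: algebra_simps)
  qed
  then have "h^2 * (L1^2 + L2^2 - C^2) \<le> h^2 * (- 2 * L1 * L2)"
    unfolding sL tL by (simp add: power2_eq_square algebra_simps)
  moreover have h2: "h^2 > 0" using hp by simp
  ultimately have "L1^2 + L2^2 - C^2 \<le> - 2 * L1 * L2" using mult_le_cancel_left_pos by blast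
  then have "(L1 + L2)^2 \<le> C^2" by (simp add: power2_eq_square algebra_simps)
  then have "L1 + L2 \<le> C" using power2_le_imp_le[of "L1+L2" C] C_def by simp
  then show ?thesis
    using um mw dist_triangle[of a w b] dist_triangle[of u w a] unfolding btw_def L1_def L2_def C_def h_def
    by (simp add: dist_commute)
qed

lemma gpath_lip:
  assumes cat: "CAT0 TYPE('a::metric_space)" and s: "s \<in> {0..1}"
  shows "dist (gpath v w s) (gpath v w' s) \<le> s * dist w (w'::'a)"
proof -
  have "(dist (gpath v w s) (gpath v w' s))^2 \<le> s^2*(dist v w)^2 + s^2*(dist v w')^2
           - (s * s)*((dist v w)^2 + (dist v w')^2 - (dist w w')^2)"
    using CAT0_ineq[OF cat gpath_geo[OF cat, of v w] gpath_geo[OF cat, of v w'] s s] .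
  also have "\<dots> = (s * dist w w')^2" by (simp add: power2_eq_square algebra_simps)
  finally have X: "(dist (gpath v w s) (gpath v w' s))^2 \<le> (s * dist w w')^2" .
  have "0 \<le> s * dist w w'" using s by simp
  then show ?thesis using X power2_le_imp_le by blast
qed

lemma gpath_cont:
  assumes cat: "CAT0 TYPE('a::metric_space)"
  shows "continuous_on ({0..1} \<times> UNIV) (\<lambda>p. gpath (v::'a) (snd p) (fst p))"
  unfolding continuous_on_iff
proof (intro ballI allI impI)
  fix p :: "real \<times> 'a" and e :: real
  assume p: "p \<in> {0..1} \<times> UNIV" and e: "e > 0"
  obtain s w where pw: "p = (s, w)" by (cases p)
  have s: "s \<in> {0..1}" using p pw by auto
  define d where "d = min 1 (e / (2 * (dist v w + 2)))"
  have pos: "0 < dist v w + 2" using zero_le_dist[of v w] by linarith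
  have dp: "d > 0" using e pos unfolding d_def by simp
  show "\<exists>d>0. \<forall>x'\<in>{0..1} \<times> UNIV. dist x' p < d \<longrightarrow>
          dist (gpath v (snd x') (fst x')) (gpath v (snd p) (fst p)) < e"
  proof (intro exI[of _ d] conjI ballI impI dp)
    fix q assume q: "q \<in> {0..1} \<times> (UNIV::'a set)" and dq: "dist q p < d"
    obtain s' w' where qw: "q = (s', w')" by (cases q)
    have s': "s' \<in> {0..1}" using q qw by auto
    have ds: "\<bar>s' - s\<bar> < d" using dist_fst_le[of q p] dq qw pw by (simp add: dist_real_def)
    have dw: "dist w' w < d" using dist_snd_le[of q p] dq qw pw by simp
    have "dist (gpath v w' s') (gpath v w s) \<le> dist (gpath v w' s') (gpath v w' s) + dist (gpath v w' s) (gpath v w s)"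
      by (rule dist_triangle)
    also have "dist (gpath v w' s') (gpath v w' s) = \<bar>s' - s\<bar> * dist v w'"
      using geo_dist[OF gpath_geo[OF cat] s' s] .
    also have "dist (gpath v w' s) (gpath v w s) \<le> s * dist w' w" using gpath_lip[OF cat s] .
    finally have A: "dist (gpath v w' s') (gpath v w s) \<le> \<bar>s' - s\<bar> * dist v w' + s * dist w' w" by simp
    have "dist v w' \<le> dist v w + 1" using dist_triangle[of v w' w] dw d_def by (simp add: dist_commute)
    then have "\<bar>s' - s\<bar> * dist v w' \<le> d * (dist v w + 1)"
      using ds by (intro mult_mono) auto
    moreover have "s * dist w' w \<le> d"
    proof -
      have "s * dist w' w \<le> 1 * dist w' w" using s by (intro mult_right_mono) auto
      then show ?thesis using dw by simp
    qed
    moreover have "d * (dist v w + 2) = d * (dist v w + 1) + d" by (simp add: algebra_simps)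
    ultimately have "dist (gpath v w' s') (gpath v w s) \<le> d * (dist v w + 2)" using A by linarith
    also have "\<dots> < e"
    proof -
      have "d \<le> e / (2 * (dist v w + 2))" unfolding d_def by simp
      then have "d * (2 * (dist v w + 2)) \<le> e" using pos by (simp add: pos_le_divide_eq)
      moreover have "d * (dist v w + 2) < d * (2 * (dist v w + 2))" using dp pos by simp
      ultimately show ?thesis by linarith
    qed
    finally show "dist (gpath v (snd q) (fst q)) (gpath v (snd p) (fst p)) < e" using qw pw by simp
  qed
qed



lemma null_loop:
  assumes cat: "CAT0 TYPE('a::metric_space)" and L: "path L" "pathfinish L = pathstart L"
    and av: "\<forall>q\<in>path_image L. (p::'a) \<notin> seg v q"
  shows "homotopic_loops (UNIV - {p}) L (\<lambda>_. L 0)"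
proof -
  have Lc: "continuous_on {0..1} L" using L(1) unfolding path_def .
  have L01: "L 1 = L 0" using L(2) unfolding pathfinish_def pathstart_def .
  have G: "continuous_on ({0..1} \<times> UNIV) (\<lambda>p. gpath v (snd p) (fst p))" by (rule gpath_cont[OF cat])
  have segin: "gpath v w r \<in> seg v w" if "r \<in> {0..1}" for w r
    using seg_eq[OF cat] that by auto
  have h1: "homotopic_loops (UNIV - {p}) L (\<lambda>_. v)"
    unfolding homotopic_loops
  proof (intro exI[of _ "\<lambda>x. gpath v (L (snd x)) (1 - fst x)"] conjI ballI)
    have c1: "continuous_on ({0..1} \<times> {0..1}) (\<lambda>x::real\<times>real. (1 - fst x, L (snd x)))"
    proof (intro continuous_on_Pair continuous_intros)
      show "continuous_on ({0..1} \<times> {0..1}) (\<lambda>x::real\<times>real. L (snd x))"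
        by (rule continuous_on_compose2[OF Lc continuous_on_snd]) auto
    qed
    have sub: "(\<lambda>x::real\<times>real. (1 - fst x, L (snd x))) ` ({0..1} \<times> {0..1}) \<subseteq> {0..1} \<times> UNIV" by auto
    show "continuous_on ({0..1} \<times> {0..1}) (\<lambda>x::real\<times>real. gpath v (L (snd x)) (1 - fst x))"
      using continuous_on_compose2[OF G c1 sub] by simp
    show "(\<lambda>x::real\<times>real. gpath v (L (snd x)) (1 - fst x)) \<in> {0..1} \<times> {0..1} \<rightarrow> UNIV - {p}"
    proof
      fix x :: "real \<times> real" assume x: "x \<in> {0..1} \<times> {0..1}"
      then have "L (snd x) \<in> path_image L" unfolding path_image_def by auto
      moreover have "gpath v (L (snd x)) (1 - fst x) \<in> seg v (L (snd x))" using x by (intro segin) auto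
      ultimately show "gpath v (L (snd x)) (1 - fst x) \<in> UNIV - {p}" using av by auto
    qed
    fix x :: real assume "x \<in> {0..1}"
    show "gpath v (L (snd (0, x))) (1 - fst (0::real, x)) = L x"
      using geo_ends(2)[OF gpath_geo[OF cat]] by simp
    show "gpath v (L (snd (1, x))) (1 - fst (1::real, x)) = v"
      using geo_ends(1)[OF gpath_geo[OF cat]] by simp
  next
    fix t :: real assume "t \<in> {0..1}"
    show "pathfinish ((\<lambda>x. gpath v (L (snd x)) (1 - fst x)) \<circ> Pair t) =
          pathstart ((\<lambda>x. gpath v (L (snd x)) (1 - fst x)) \<circ> Pair t)"
      unfolding pathfinish_def pathstart_def using L01 by simp
  qed
  have h2: "homotopic_loops (UNIV - {p}) (\<lambda>_. v) (\<lambda>_. L 0)"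
    unfolding homotopic_loops
  proof (intro exI[of _ "\<lambda>x. gpath v (L 0) (fst x)"] conjI ballI)
    have c1: "continuous_on ({0..1} \<times> {0..1}) (\<lambda>x::real\<times>real. (fst x, L 0))"
      by (intro continuous_on_Pair continuous_intros)
    have sub: "(\<lambda>x::real\<times>real. (fst x, L 0)) ` ({0..1} \<times> {0..1}) \<subseteq> {0..1} \<times> UNIV" by auto
    show "continuous_on ({0..1} \<times> {0..1}) (\<lambda>x::real\<times>real. gpath v (L 0) (fst x))"
      using continuous_on_compose2[OF G c1 sub] by simp
    show "(\<lambda>x::real\<times>real. gpath v (L 0) (fst x)) \<in> {0..1} \<times> {0..1} \<rightarrow> UNIV - {p}"
    proof
      fix x :: "real \<times> real" assume x: "x \<in> {0..1} \<times> {0..1}"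
      have "L 0 \<in> path_image L" unfolding path_image_def by auto
      moreover have "gpath v (L 0) (fst x) \<in> seg v (L 0)" using x by (intro segin) auto
      ultimately show "gpath v (L 0) (fst x) \<in> UNIV - {p}" using av by auto
    qed
    fix x :: real assume "x \<in> {0..1}"
    show "gpath v (L 0) (fst (0::real, x)) = v"
      using geo_ends(1)[OF gpath_geo[OF cat]] by simp
    show "gpath v (L 0) (fst (1::real, x)) = L 0"
      using geo_ends(2)[OF gpath_geo[OF cat]] by simp
  next
    fix t :: real assume "t \<in> {0..1}"
    show "pathfinish ((\<lambda>x. gpath v (L 0) (fst x)) \<circ> Pair t) =
          pathstart ((\<lambda>x. gpath v (L 0) (fst x)) \<circ> Pair t)"
      unfolding pathfinish_def pathstart_def by simp
  qed
  show ?thesis by (rule homotopic_loops_trans[OF h1 h2])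
qed

lemma gpath_path:
  assumes cat: "CAT0 TYPE('a::metric_space)"
  shows "path (gpath (x::'a) y)" "pathstart (gpath x y) = x" "pathfinish (gpath x y) = y"
    "path_image (gpath x y) = seg x y"
proof -
  have G: "continuous_on ({0..1} \<times> UNIV) (\<lambda>p. gpath x (snd p) (fst p))" by (rule gpath_cont[OF cat])
  have c1: "continuous_on {0..1} (\<lambda>s::real. (s, y))" by (intro continuous_on_Pair continuous_intros)
  have sub: "(\<lambda>s::real. (s, y)) ` {0..1} \<subseteq> {0..1} \<times> UNIV" by auto
  show "path (gpath x y)" unfolding path_def using continuous_on_compose2[OF G c1 sub] by simp
  show "pathstart (gpath x y) = x" "pathfinish (gpath x y) = y"
    unfolding pathstart_def pathfinish_def using geo_ends[OF gpath_geo[OF cat]] by auto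
  show "path_image (gpath x y) = seg x y" unfolding path_image_def using seg_eq[OF cat] by simp
qed

lemma tri_loop_props:
  assumes cat: "CAT0 TYPE('a::metric_space)"
  shows "path (tri_loop (x::'a) y z)" "pathfinish (tri_loop x y z) = pathstart (tri_loop x y z)"
    "path_image (tri_loop x y z) \<subseteq> tri x y z" "tri_loop x y z 0 = x"
proof -
  note P = gpath_path[OF cat]
  show "path (tri_loop x y z)" unfolding tri_loop_def
    by (intro path_join_imp) (auto simp: P)
  show "pathfinish (tri_loop x y z) = pathstart (tri_loop x y z)" unfolding tri_loop_def
    by (simp add: P)
  show "path_image (tri_loop x y z) \<subseteq> tri x y z" unfolding tri_loop_def tri_def
    using path_image_join_subset[of "gpath x y +++ gpath y z" "gpath z x"]
      path_image_join_subset[of "gpath x y" "gpath y z"] by (auto simp: P)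
  have "pathstart (tri_loop x y z) = x" unfolding tri_loop_def by (simp add: P)
  then show "tri_loop x y z 0 = x" unfolding pathstart_def .
qed

lemma full_tri_cone:
  assumes cat: "CAT0 TYPE('a::metric_space)" and p: "p \<in> full_tri x y (z::'a)"
  shows "\<exists>q\<in>tri x y z. btw v p q"
proof (cases "p \<in> tri x y z")
  case True
  then show ?thesis by (intro bexI[of _ p]) (auto simp: btw_def)
next
  case False
  then have nh: "\<not> homotopic_loops (UNIV - {p}) (tri_loop x y z) (\<lambda>_. tri_loop x y z 0)"
    using p unfolding full_tri_def by auto
  show ?thesis
  proof (rule ccontr)
    assume "\<not> ?thesis"
    then have "\<forall>q\<in>path_image (tri_loop x y z). p \<notin> seg v q"
      using tri_loop_props(3)[OF cat, of x y z] seg_char[OF cat] by blast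
    then have "homotopic_loops (UNIV - {p}) (tri_loop x y z) (\<lambda>_. tri_loop x y z 0)"
      using null_loop[OF cat tri_loop_props(1,2)[OF cat]] by blast
    then show False using nh by simp
  qed
qed



lemma btw_sub: "btw u q w \<Longrightarrow> btw u z q \<Longrightarrow> btw u z w"
  unfolding btw_def using dist_triangle[of z w q] dist_triangle[of u w z] by linarith

lemma btw_ext: "btw u a w \<Longrightarrow> btw a q w \<Longrightarrow> btw u q w"
  unfolding btw_def using dist_triangle[of u q a] dist_triangle[of u w q] by linarith

lemma btw_left: "btw u a w \<Longrightarrow> btw a b w \<Longrightarrow> btw u a b"
  unfolding btw_def using dist_triangle[of u w b] dist_triangle[of u b a] by linarith

lemma btw_triv: "btw u u w" "btw u w w"
  unfolding btw_def by simp_all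

lemma core:
  assumes cat: "CAT0 TYPE('a::metric_space)" and ne: "a \<noteq> (b::'a)"
    and g1: "btw x1 a b" "btw a b x2" "btw x1 a x2" "btw x1 b x2"
    and s1: "btw x3 a b" "btw a b x4" "btw x3 a x4" "btw x3 b x4"
    and I: "\<And>z. btw x1 z x2 \<Longrightarrow> btw x3 z x4 \<Longrightarrow> btw a z b"
    and p123: "\<exists>q. (btw x1 q x2 \<or> btw x2 q x3 \<or> btw x3 q x1) \<and> btw x3 p q"
    and p134: "\<exists>q. (btw x1 q x3 \<or> btw x3 q x4 \<or> btw x4 q x1) \<and> btw x3 p q"
    and p124: "\<exists>q. (btw x1 q x2 \<or> btw x2 q x4 \<or> btw x4 q x1) \<and> btw x2 p q"
    and p234: "\<exists>q. (btw x2 q x3 \<or> btw x3 q x4 \<or> btw x4 q x2) \<and> btw x2 p q"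
  shows "btw a p b"
proof (rule ccontr)
  assume np: "\<not> btw a p b"
  have o32: "btw x3 a x2" by (rule btw_overlap[OF cat s1(1) g1(2) ne])
  have o14: "btw x1 a x4" by (rule btw_overlap[OF cat g1(1) s1(2) ne])
  have o32b: "btw x3 b x2" using o32 g1(2) s1(1) unfolding btw_def by linarith
  have o14b: "btw x1 b x4" using o14 s1(2) g1(1) unfolding btw_def by linarith
  define D where "D = (\<lambda>z. \<exists>q. btw x1 q a \<and> btw x3 z q)"
  define E where "E = (\<lambda>z. \<exists>q. btw b q x4 \<and> btw x2 z q)"
  note sym = btw_sym
  have c1: "D p \<or> btw a p x2"
  proof -
    obtain q where q: "btw x1 q x2 \<or> btw x2 q x3 \<or> btw x3 q x1" "btw x3 p q" using p123 by blast
    have ii: "D p \<or> btw a p x2" if "btw x3 q x2"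
    proof -
      have "btw x3 p x2" by (rule btw_sub[OF that q(2)])
      then have "btw x3 p a \<or> btw a p x2" by (rule btw_split[OF cat o32])
      then show ?thesis unfolding D_def using btw_triv by blast
    qed
    show ?thesis
    proof (cases "btw x1 q x2")
      case True
      then have "btw x1 q a \<or> btw a q x2" by (rule btw_split[OF cat g1(3)])
      then show ?thesis
      proof
        assume "btw x1 q a" then show ?thesis unfolding D_def using q(2) by blast
      next
        assume "btw a q x2" then have "btw x3 q x2" by (rule btw_ext[OF o32])
        then show ?thesis by (rule ii)
      qed
    next
      case False
      then have "btw x3 q x2 \<or> btw x3 q x1" using q(1) sym by blast
      then show ?thesis
      proof
        assume "btw x3 q x2" then show ?thesis by (rule ii)
      next
        assume "btw x3 q x1" then have "btw x3 p x1" using btw_sub q(2) by blast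
        then show ?thesis unfolding D_def using btw_triv by blast
      qed
    qed
  qed
  have c2: "D p \<or> btw a p x4"
  proof -
    obtain q where q: "btw x1 q x3 \<or> btw x3 q x4 \<or> btw x4 q x1" "btw x3 p q" using p134 by blast
    have ii: "D p \<or> btw a p x4" if "btw x3 q x4"
    proof -
      have "btw x3 p x4" by (rule btw_sub[OF that q(2)])
      then have "btw x3 p a \<or> btw a p x4" by (rule btw_split[OF cat s1(3)])
      then show ?thesis unfolding D_def using btw_triv by blast
    qed
    show ?thesis
    proof (cases "btw x1 q x4")
      case True
      then have "btw x1 q a \<or> btw a q x4" by (rule btw_split[OF cat o14])
      then show ?thesis
      proof
        assume "btw x1 q a" then show ?thesis unfolding D_def using q(2) by blast
      next
        assume "btw a q x4" then have "btw x3 q x4" by (rule btw_ext[OF s1(3)])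
        then show ?thesis by (rule ii)
      qed
    next
      case False
      then have "btw x3 q x4 \<or> btw x3 q x1" using q(1) sym by blast
      then show ?thesis
      proof
        assume "btw x3 q x4" then show ?thesis by (rule ii)
      next
        assume "btw x3 q x1" then have "btw x3 p x1" using btw_sub q(2) by blast
        then show ?thesis unfolding D_def using btw_triv by blast
      qed
    qed
  qed
  have o21: "btw x2 b x1" using g1(4) sym by blast
  have o23: "btw x2 b x3" using o32b sym by blast
  have c3: "E p \<or> btw x1 p b"
  proof -
    obtain q where q: "btw x1 q x2 \<or> btw x2 q x4 \<or> btw x4 q x1" "btw x2 p q" using p124 by blast
    have ii: "E p \<or> btw x1 p b" if "btw x2 q x1"
    proof -
      have "btw x2 p x1" by (rule btw_sub[OF that q(2)])
      then have "btw x2 p b \<or> btw b p x1" by (rule btw_split[OF cat o21])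
      then show ?thesis unfolding E_def using btw_triv sym by blast
    qed
    show ?thesis
    proof (cases "btw x1 q x4")
      case True
      then have "btw x1 q b \<or> btw b q x4" by (rule btw_split[OF cat o14b])
      then show ?thesis
      proof
        assume "btw b q x4" then show ?thesis unfolding E_def using q(2) by blast
      next
        assume "btw x1 q b" then have "btw b q x1" using sym by blast
        then have "btw x2 q x1" by (rule btw_ext[OF o21])
        then show ?thesis by (rule ii)
      qed
    next
      case False
      then have "btw x2 q x1 \<or> btw x2 q x4" using q(1) sym by blast
      then show ?thesis
      proof
        assume "btw x2 q x1" then show ?thesis by (rule ii)
      next
        assume "btw x2 q x4" then have "btw x2 p x4" using btw_sub q(2) by blast
        then show ?thesis unfolding E_def using btw_triv by blast
      qed
    qed
  qed
  have c4: "E p \<or> btw x3 p b"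
  proof -
    obtain q where q: "btw x2 q x3 \<or> btw x3 q x4 \<or> btw x4 q x2" "btw x2 p q" using p234 by blast
    have ii: "E p \<or> btw x3 p b" if "btw x2 q x3"
    proof -
      have "btw x2 p x3" by (rule btw_sub[OF that q(2)])
      then have "btw x2 p b \<or> btw b p x3" by (rule btw_split[OF cat o23])
      then show ?thesis unfolding E_def using btw_triv sym by blast
    qed
    show ?thesis
    proof (cases "btw x3 q x4")
      case True
      then have "btw x3 q b \<or> btw b q x4" by (rule btw_split[OF cat s1(4)])
      then show ?thesis
      proof
        assume "btw b q x4" then show ?thesis unfolding E_def using q(2) by blast
      next
        assume "btw x3 q b" then have "btw b q x3" using sym by blast
        then have "btw x2 q x3" by (rule btw_ext[OF o23])
        then show ?thesis by (rule ii)
      qed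
    next
      case False
      then have "btw x2 q x3 \<or> btw x2 q x4" using q(1) sym by blast
      then show ?thesis
      proof
        assume "btw x2 q x3" then show ?thesis by (rule ii)
      next
        assume "btw x2 q x4" then have "btw x2 p x4" using btw_sub q(2) by blast
        then show ?thesis unfolding E_def using btw_triv by blast
      qed
    qed
  qed
  have Dp: "D p"
  proof (rule ccontr)
    assume "\<not> D p"
    then have "btw a p x2" "btw a p x4" using c1 c2 by auto
    then have "btw x1 p x2" "btw x3 p x4" using btw_ext[OF g1(3)] btw_ext[OF s1(3)] by auto
    then show False using I np by blast
  qed
  have Ep: "E p"
  proof (rule ccontr)
    assume "\<not> E p"
    then have "btw x1 p b" "btw x3 p b" using c3 c4 by auto
    then have "btw x1 p x2" "btw x3 p x4" using btw_sub[OF g1(4)] btw_sub[OF s1(4)] by auto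
    then show False using I np by blast
  qed
  obtain q where q: "btw x1 q a" "btw x3 p q" using Dp unfolding D_def by blast
  obtain q' where q': "btw b q' x4" "btw x2 p q'" using Ep unfolding E_def by blast
  have "dist a b > 0" using ne by simp
  moreover have "dist x3 x2 \<le> dist x3 p + dist p x2" by (rule dist_triangle)
  moreover have "dist q q' \<le> dist q p + dist p q'" by (rule dist_triangle)
  moreover have "dist x1 x4 \<le> dist x1 q + dist q q' + dist q' x4"
    using dist_triangle[of x1 x4 q] dist_triangle[of q x4 q'] by linarith
  moreover have "dist x3 q \<le> dist x3 a + dist a q" by (rule dist_triangle)
  moreover have "dist x2 q' \<le> dist x2 b + dist b q'" by (rule dist_triangle)
  moreover have "dist p x2 = dist x2 p" "dist q p = dist p q" "dist x2 b = dist b x2" "dist a q = dist q a"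
    by (simp_all add: dist_commute)
  ultimately show False using q q' o32 g1(2) o14 s1(2) unfolding btw_def by linarith
qed



lemma btw_right: "btw u b a \<Longrightarrow> btw u a w \<Longrightarrow> btw b a w"
  unfolding btw_def using dist_triangle[of u w b] dist_triangle[of b w a] by linarith

lemma aux2:
  assumes cat: "CAT0 TYPE('a::metric_space)" and ne: "a \<noteq> (b::'a)"
    and h: "btw x1 a x2" "btw x1 b x2" "btw x3 a x4" "btw x3 b x4" and ab2: "btw a b x2"
    and I: "\<And>z. btw x1 z x2 \<Longrightarrow> btw x3 z x4 \<Longrightarrow> btw a z b"
    and C123: "\<And>v. \<exists>q. (btw x1 q x2 \<or> btw x2 q x3 \<or> btw x3 q x1) \<and> btw v p q"
    and C124: "\<And>v. \<exists>q. (btw x1 q x2 \<or> btw x2 q x4 \<or> btw x4 q x1) \<and> btw v p q"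
    and C134: "\<And>v. \<exists>q. (btw x1 q x3 \<or> btw x3 q x4 \<or> btw x4 q x1) \<and> btw v p q"
    and C234: "\<And>v. \<exists>q. (btw x2 q x3 \<or> btw x3 q x4 \<or> btw x4 q x2) \<and> btw v p q"
  shows "btw a p b"
proof -
  have g1: "btw x1 a b" by (rule btw_left[OF h(1) ab2])
  have "btw x3 b a \<or> btw a b x4" by (rule btw_split[OF cat h(3) h(4)])
  then show ?thesis
  proof
    assume ab4: "btw a b x4"
    show ?thesis
      by (rule core[OF cat ne g1 ab2 h(1) h(2) btw_left[OF h(3) ab4] ab4 h(3) h(4) I
            C123[of x3] C134[of x3] C124[of x2] C234[of x2]])
  next
    assume b3: "btw x3 b a"
    have ba4: "btw b a x4" by (rule btw_right[OF b3 h(3)])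
    have s1: "btw x4 a b" "btw a b x3" "btw x4 a x3" "btw x4 b x3"
      using ba4 b3 h(3) h(4) btw_sym by blast+
    have I': "btw a z b" if "btw x1 z x2" "btw x4 z x3" for z
      using I that btw_sym by blast
    have p134: "\<exists>q. (btw x1 q x4 \<or> btw x4 q x3 \<or> btw x3 q x1) \<and> btw x4 p q"
      using C134[of x4] btw_sym by blast
    have p234: "\<exists>q. (btw x2 q x4 \<or> btw x4 q x3 \<or> btw x3 q x2) \<and> btw x2 p q"
      using C234[of x2] btw_sym by blast
    show ?thesis
      by (rule core[OF cat ne g1 ab2 h(1) h(2) s1 I' C124[of x4] p134 C123[of x2] p234])
  qed
qed

lemma aux:
  assumes cat: "CAT0 TYPE('a::metric_space)" and ne: "a \<noteq> (b::'a)"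
    and h: "btw x1 a x2" "btw x1 b x2" "btw x3 a x4" "btw x3 b x4"
    and I: "\<And>z. btw x1 z x2 \<Longrightarrow> btw x3 z x4 \<Longrightarrow> btw a z b"
    and C123: "\<And>v. \<exists>q. (btw x1 q x2 \<or> btw x2 q x3 \<or> btw x3 q x1) \<and> btw v p q"
    and C124: "\<And>v. \<exists>q. (btw x1 q x2 \<or> btw x2 q x4 \<or> btw x4 q x1) \<and> btw v p q"
    and C134: "\<And>v. \<exists>q. (btw x1 q x3 \<or> btw x3 q x4 \<or> btw x4 q x1) \<and> btw v p q"
    and C234: "\<And>v. \<exists>q. (btw x2 q x3 \<or> btw x3 q x4 \<or> btw x4 q x2) \<and> btw v p q"
  shows "btw a p b"
proof -
  have "btw x1 b a \<or> btw a b x2" by (rule btw_split[OF cat h(1) h(2)])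
  then show ?thesis
  proof
    assume "btw a b x2"
    then show ?thesis by (rule aux2[OF cat ne h _ I C123 C124 C134 C234])
  next
    assume b1: "btw x1 b a"
    have ba2: "btw b a x2" by (rule btw_right[OF b1 h(1)])
    have I': "btw b z a" if "btw x1 z x2" "btw x3 z x4" for z
      using I that btw_sym by blast
    have "btw b p a"
      by (rule aux2[OF cat ne[symmetric] h(2) h(1) h(4) h(3) ba2 I' C123 C124 C134 C234])
    then show ?thesis using btw_sym by blast
  qed
qed

lemma cone_btw:
  assumes cat: "CAT0 TYPE('a::metric_space)" and "p \<in> full_tri x y (z::'a)"
  shows "\<exists>q. (btw x q y \<or> btw y q z \<or> btw z q x) \<and> btw v p q"
proof -
  obtain q where q: "q \<in> seg x y \<union> seg y z \<union> seg z x" "btw v p q"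
    using full_tri_cone[OF cat assms(2), of v] unfolding tri_def by blast
  then have "btw x q y \<or> btw y q z \<or> btw z q x" using seg_char[OF cat] by blast
  then show ?thesis using q(2) by blast
qed

theorem theorem8p1:
  fixes C :: "'a::metric_space cell set" and x1 x2 x3 x4 :: 'a
  assumes "euclidean_polygonal_complex C"
    and "CAT0 TYPE('a)"
    and "\<exists>a b. a \<noteq> b \<and> seg x1 x2 \<inter> seg x3 x4 = seg a b"
  shows "full_tri x1 x2 x3 \<inter> full_tri x1 x2 x4 \<inter> full_tri x1 x3 x4 \<inter> full_tri x2 x3 x4
           = seg x1 x2 \<inter> seg x3 x4"
proof -
  note cat = assms(2)
  obtain a b where ne: "a \<noteq> b" and eq: "seg x1 x2 \<inter> seg x3 x4 = seg a b" using assms(3) by blast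
  have "a \<in> seg a b" "b \<in> seg a b" using btw_triv seg_char[OF cat] by blast+
  then have h: "btw x1 a x2" "btw x1 b x2" "btw x3 a x4" "btw x3 b x4"
    using eq seg_char[OF cat] by blast+
  have I: "btw a z b" if "btw x1 z x2" "btw x3 z x4" for z
    using that eq seg_char[OF cat] by blast
  show ?thesis
  proof
    show "full_tri x1 x2 x3 \<inter> full_tri x1 x2 x4 \<inter> full_tri x1 x3 x4 \<inter> full_tri x2 x3 x4
           \<subseteq> seg x1 x2 \<inter> seg x3 x4"
    proof
      fix p assume p: "p \<in> full_tri x1 x2 x3 \<inter> full_tri x1 x2 x4 \<inter> full_tri x1 x3 x4 \<inter> full_tri x2 x3 x4"
      have "btw a p b"
        by (rule aux[OF cat ne h I]) (use p cone_btw[OF cat] in blast)+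
      then show "p \<in> seg x1 x2 \<inter> seg x3 x4" using eq seg_char[OF cat] by blast
    qed
  next
    show "seg x1 x2 \<inter> seg x3 x4
          \<subseteq> full_tri x1 x2 x3 \<inter> full_tri x1 x2 x4 \<inter> full_tri x1 x3 x4 \<inter> full_tri x2 x3 x4"
      unfolding full_tri_def tri_def by blast
  qed
qed


end
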